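(* Let $\mathcal{D}=\{d_1,\dots,d_n\}$ (data) and $\mathcal{H}=\{h_1,\dots,h_m\}$ (hypotheses) be finite sets. Let $M=(M_{ij})$ be a non-negative $n\times m$ matrix with no zero row and no zero column, let $\mathbf{r}=(r_1,\dots,r_n)$ be a probability vector with all $r_i>0$ (the teacher's prior $P_{T_0}(d_i)=r_i$ on $\mathcal{D}$), and let $\mathbf{c}=(c_1,\dots,c_m)$ be a probability vector with all $c_j>0$ (the learner's prior $P_{L_0}(h_j)=c_j$ on $\mathcal{H}$); these priors are arbitrary. Define the $n\times m$ matrix $\widetilde{L}_0$ by $(\widetilde{L}_0)_{ij}= r_i\, M_{ij}/\sum_{k=1}^m M_{ik}$. Suppose that $(\mathbf{r},\mathbf{c})$-Sinkhorn scaling of $\widetilde{L}_0$ converges, and let $P$ be its limit. Then the conditional communication plans $$T^\star(d_i\mid h_j)=\frac{P_{ij}}{c_j},\qquad L^\star(h_j\mid d_i)=\frac{P_{ij}}{r_i}$$ solve the cooperative inference system, i.e. for all $i,j$, $$L^\star(h_j\mid d_i)=\frac{T^\star(d_i\mid h_j)\,c_j}{\sum_{k=1}^m T^\star(d_i\mid h_k)\,c_k},\qquad T^\star(d_i\mid h_j)=\frac{L^\star(h_j\mid d_i)\,r_i}{\sum_{k=1}^n L^\star(h_j\mid d_k)\,r_k}.$$ In particular, cooperative inference is a special case of entropy-regularized optimal transport with $\lambda=1$: when all entries of $M$ are positive, $P$ is the minimizer over $U(\mathbf{r},\mathbf{c})$ of $\langle C,P'\rangle-\mathrm{h}(P')$,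 where $C_{ij}=-\log\big(M_{ij}/\sum_{k}M_{ik}\big)-\log r_i$.
   Context: $(\mathbf{r},\mathbf{c})$-Sinkhorn scaling of a non-negative matrix $A$ is the iterated alternation of rescaling each row $i$ of $A$ so that its sum equals $r_i$ and rescaling each column $j$ so that its sum equals $c_j$. $U(\mathbf{r},\mathbf{c})$ denotes the set of non-negative $n\times m$ matrices with row sums $\mathbf{r}$ and column sums $\mathbf{c}$. For $P'\in U(\mathbf{r},\mathbf{c})$, $\langle C,P'\rangle=\sum_{i,j}C_{ij}P'_{ij}$ and $\mathrm{h}(P')=-\sum_{i,j}P'_{ij}\log P'_{ij}$ is the Shannon entropy. Entropy-regularized optimal transport with parameter $\lambda>0$ and cost $C$ seeks the minimizer over $U(\mathbf{r},\mathbf{c})$ of $\langle C,P'\rangle-\frac{1}{\lambda}\mathrm{h}(P')$. *)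

theory Defs
  imports "HOL-Analysis.Analysis"
begin

text \<open>Matrices indexed by finite types: rows 'd (data), columns 'h (hypotheses).\<close>

definition row_scale :: "('d::finite \<Rightarrow> real) \<Rightarrow> ('d \<Rightarrow> 'h::finite \<Rightarrow> real) \<Rightarrow> ('d \<Rightarrow> 'h \<Rightarrow> real)" where
  "row_scale r A = (\<lambda>i j. A i j * r i / (\<Sum>k\<in>UNIV. A i k))"

definition col_scale :: "('h::finite \<Rightarrow> real) \<Rightarrow> ('d::finite \<Rightarrow> 'h \<Rightarrow> real) \<Rightarrow> ('d \<Rightarrow> 'h \<Rightarrow> real)" where
  "col_scale c A = (\<lambda>i j. A i j * c j / (\<Sum>k\<in>UNIV. A k j))"

text \<open>The full alternating Sinkhorn sequence: step 0 is A, odd steps rescale rows,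
  even steps (>0) rescale columns.\<close>
fun sinkhorn_seq :: "('d::finite \<Rightarrow> real) \<Rightarrow> ('h::finite \<Rightarrow> real) \<Rightarrow> ('d \<Rightarrow> 'h \<Rightarrow> real) \<Rightarrow> nat \<Rightarrow> ('d \<Rightarrow> 'h \<Rightarrow> real)" where
  "sinkhorn_seq r c A 0 = A"
| "sinkhorn_seq r c A (Suc k) =
     (if even k then row_scale r (sinkhorn_seq r c A k) else col_scale c (sinkhorn_seq r c A k))"

definition sinkhorn_converges_to :: "('d::finite \<Rightarrow> real) \<Rightarrow> ('h::finite \<Rightarrow> real) \<Rightarrow> ('d \<Rightarrow> 'h \<Rightarrow> real) \<Rightarrow> ('d \<Rightarrow> 'h \<Rightarrow> real) \<Rightarrow> bool" where
  "sinkhorn_converges_to r c A P \<longleftrightarrow> (\<forall>i j. (\<lambda>k. sinkhorn_seq r c A k i j) \<longlonglongrightarrow> P i j)"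

definition transport_polytope :: "('d::finite \<Rightarrow> real) \<Rightarrow> ('h::finite \<Rightarrow> real) \<Rightarrow> ('d \<Rightarrow> 'h \<Rightarrow> real) set" ("U") where
  "U r c = {P. (\<forall>i j. P i j \<ge> 0) \<and> (\<forall>i. (\<Sum>j\<in>UNIV. P i j) = r i) \<and> (\<forall>j. (\<Sum>i\<in>UNIV. P i j) = c j)}"

definition frob :: "('d::finite \<Rightarrow> 'h::finite \<Rightarrow> real) \<Rightarrow> ('d \<Rightarrow> 'h \<Rightarrow> real) \<Rightarrow> real" where
  "frob C P = (\<Sum>i\<in>UNIV. \<Sum>j\<in>UNIV. C i j * P i j)"

definition shannon_entropy :: "('d::finite \<Rightarrow> 'h::finite \<Rightarrow> real) \<Rightarrow> real" where
  "shannon_entropy P = - (\<Sum>i\<in>UNIV. \<Sum>j\<in>UNIV. (if P i j = 0 then 0 else P i j * ln (P i j)))"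

end

theory Submission
  imports Defs
begin

lemma cross_pres:
  fixes B B' A :: "'a \<Rightarrow> 'b \<Rightarrow> real"
  assumes "\<And>x y. B' x y = B x y * (f x * g y)"
  and "B i j * B k l * A i l * A k j = B i l * B k j * A i j * A k l"
  shows "B' i j * B' k l * A i l * A k j = B' i l * B' k j * A i j * A k l"
proof -
  have "B' i j * B' k l * A i l * A k j = (B i j * B k l * A i l * A k j) * (f i * f k * g j * g l)"
    by (simp add: assms(1) algebra_simps)
  also have "\<dots> = (B i l * B k j * A i j * A k l) * (f i * f k * g j * g l)" using assms(2) by simp
  also have "\<dots> = B' i l * B' k j * A i j * A k l" by (simp add: assms(1) algebra_simps)
  finally show ?thesis .
qed

lemma cross_inv:
  "sinkhorn_seq r c A n i j * sinkhorn_seq r c A n k l * A i l * A k j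
   = sinkhorn_seq r c A n i l * sinkhorn_seq r c A n k j * A i j * A k l"
proof (induction n)
  case 0
  show ?case by (simp add: algebra_simps)
next
  case (Suc n)
  show ?case
  proof (cases "even n")
    case True
    then have e: "sinkhorn_seq r c A (Suc n) = row_scale r (sinkhorn_seq r c A n)" by simp
    show ?thesis unfolding e
      by (rule cross_pres[OF _ Suc.IH, where f="\<lambda>x. r x / (\<Sum>k\<in>UNIV. sinkhorn_seq r c A n x k)"
            and g="\<lambda>_. 1"]) (simp add: row_scale_def)
  next
    case False
    then have e: "sinkhorn_seq r c A (Suc n) = col_scale c (sinkhorn_seq r c A n)" by simp
    show ?thesis unfolding e
      by (rule cross_pres[OF _ Suc.IH, where g="\<lambda>y. c y / (\<Sum>k\<in>UNIV. sinkhorn_seq r c A n k y)"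
            and f="\<lambda>_. 1"]) (simp add: col_scale_def)
  qed
qed

lemma rowsum_pos:
  fixes M B :: "'d::finite \<Rightarrow> 'h::finite \<Rightarrow> real"
  assumes "\<forall>i. \<exists>j. M i j \<noteq> 0"
    and "\<forall>i j. (M i j = 0 \<longrightarrow> B i j = 0) \<and> (M i j \<noteq> 0 \<longrightarrow> B i j > 0)"
  shows "(\<Sum>j\<in>UNIV. B i j) > 0"
proof -
  obtain j where "M i j \<noteq> 0" using assms(1) by blast
  then have "B i j > 0" using assms(2) by blast
  moreover have "\<And>j. B i j \<ge> 0" using assms(2) by (metis less_eq_real_def order_refl)
  ultimately show ?thesis by (intro sum_pos2[of UNIV j]) auto
qed

lemma colsum_pos:
  fixes M B :: "'d::finite \<Rightarrow> 'h::finite \<Rightarrow> real"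
  assumes "\<forall>j. \<exists>i. M i j \<noteq> 0"
    and "\<forall>i j. (M i j = 0 \<longrightarrow> B i j = 0) \<and> (M i j \<noteq> 0 \<longrightarrow> B i j > 0)"
  shows "(\<Sum>i\<in>UNIV. B i j) > 0"
proof -
  obtain i where "M i j \<noteq> 0" using assms(1) by blast
  then have "B i j > 0" using assms(2) by blast
  moreover have "\<And>i. B i j \<ge> 0" using assms(2) by (metis less_eq_real_def order_refl)
  ultimately show ?thesis by (intro sum_pos2[of UNIV i]) auto
qed

lemma support:
  fixes M A :: "'d::finite \<Rightarrow> 'h::finite \<Rightarrow> real"
  assumes rows: "\<forall>i. \<exists>j. M i j \<noteq> 0" and cols: "\<forall>j. \<exists>i. M i j \<noteq> 0"
    and rp: "\<forall>i. r i > 0" and cp: "\<forall>j. c j > 0"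
    and A: "\<forall>i j. (M i j = 0 \<longrightarrow> A i j = 0) \<and> (M i j \<noteq> 0 \<longrightarrow> A i j > 0)"
  shows "\<forall>i j. (M i j = 0 \<longrightarrow> sinkhorn_seq r c A n i j = 0) \<and> (M i j \<noteq> 0 \<longrightarrow> sinkhorn_seq r c A n i j > 0)"
proof (induction n)
  case 0
  then show ?case using A by simp
next
  case (Suc n)
  let ?B = "sinkhorn_seq r c A n"
  show ?case
  proof (cases "even n")
    case True
    have "\<And>i. (\<Sum>j\<in>UNIV. ?B i j) > 0" by (rule rowsum_pos[OF rows Suc.IH])
    then show ?thesis using True Suc.IH rp by (auto simp: row_scale_def)
  next
    case False
    have "\<And>j. (\<Sum>i\<in>UNIV. ?B i j) > 0" by (rule colsum_pos[OF cols Suc.IH])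
    then show ?thesis using False Suc.IH cp by (auto simp: col_scale_def)
  qed
qed

lemma row_scale_sum:
  assumes "(\<Sum>j\<in>UNIV. A i j) \<noteq> 0"
  shows "(\<Sum>j\<in>UNIV. row_scale r A i j) = r i"
proof -
  have "(\<Sum>j\<in>UNIV. row_scale r A i j) = (\<Sum>j\<in>UNIV. A i j) * r i / (\<Sum>j\<in>UNIV. A i j)"
    unfolding row_scale_def by (simp add: sum_divide_distrib[symmetric] sum_distrib_right)
  then show ?thesis using assms by simp
qed

lemma col_scale_sum:
  assumes "(\<Sum>i\<in>UNIV. A i j) \<noteq> 0"
  shows "(\<Sum>i\<in>UNIV. col_scale c A i j) = c j"
proof -
  have "(\<Sum>i\<in>UNIV. col_scale c A i j) = (\<Sum>i\<in>UNIV. A i j) * c j / (\<Sum>i\<in>UNIV. A i j)"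
    unfolding col_scale_def by (simp add: sum_divide_distrib[symmetric] sum_distrib_right)
  then show ?thesis using assms by simp
qed

lemma term_ineq:
  fixes p q :: real
  assumes "p > 0" "q \<ge> 0"
  shows "(if q = 0 then 0 else q * ln q) - q * ln p \<ge> q - p"
proof (cases "q = 0")
  case True then show ?thesis using assms by simp
next
  case False
  then have q: "q > 0" using assms by simp
  have "ln (p / q) \<le> p / q - 1" by (rule ln_le_minus_one) (use assms q in simp)
  then have "q * ln (p / q) \<le> q * (p / q - 1)" using q by (simp add: mult_left_mono)
  then have "q * (ln p - ln q) \<le> p - q" using q assms by (simp add: ln_div right_diff_distrib)
  then show ?thesis using False by (simp add: algebra_simps)
qed

theorem proposition3:
  fixes M :: "'d::finite \<Rightarrow> 'h::finite \<Rightarrow> real"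
    and r :: "'d \<Rightarrow> real" and c :: "'h \<Rightarrow> real"
    and P :: "'d \<Rightarrow> 'h \<Rightarrow> real"
  assumes M_nonneg: "\<forall>i j. M i j \<ge> 0"
    and M_rows: "\<forall>i. \<exists>j. M i j \<noteq> 0"
    and M_cols: "\<forall>j. \<exists>i. M i j \<noteq> 0"
    and r_pos: "\<forall>i. r i > 0" and r_sum: "(\<Sum>i\<in>UNIV. r i) = 1"
    and c_pos: "\<forall>j. c j > 0" and c_sum: "(\<Sum>j\<in>UNIV. c j) = 1"
    and conv: "sinkhorn_converges_to r c (\<lambda>i j. r i * M i j / (\<Sum>k\<in>UNIV. M i k)) P"
  shows "(let Tstar = (\<lambda>i j. P i j / c j); Lstar = (\<lambda>j i. P i j / r i) in
            \<forall>i j. Lstar j i = Tstar i j * c j / (\<Sum>k\<in>UNIV. Tstar i k * c k)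
                \<and> Tstar i j = Lstar j i * r i / (\<Sum>k\<in>UNIV. Lstar j k * r k))
       \<and> ((\<forall>i j. M i j > 0) \<longrightarrow>
           (let C = (\<lambda>i j. - ln (M i j / (\<Sum>k\<in>UNIV. M i k)) - ln (r i)) in
             P \<in> U r c \<and>
             (\<forall>P'\<in>U r c. frob C P - shannon_entropy P \<le> frob C P' - shannon_entropy P')))"
proof -
  define K where "K = (\<lambda>i j. r i * M i j / (\<Sum>k\<in>UNIV. M i k))"
  define S where "S = sinkhorn_seq r c K"
  have Mrow: "\<And>i. (\<Sum>k\<in>UNIV. M i k) > 0"
  proof -
    fix i
    obtain j where "M i j \<noteq> 0" using M_rows by blast
    then have "M i j > 0" using M_nonneg by (metis less_eq_real_def)
    then show "(\<Sum>k\<in>UNIV. M i k) > 0" using M_nonneg by (intro sum_pos2[of UNIV j]) auto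
  qed
  have suppK: "\<forall>i j. (M i j = 0 \<longrightarrow> K i j = 0) \<and> (M i j \<noteq> 0 \<longrightarrow> K i j > 0)"
  proof (intro allI conjI impI)
    fix i j
    show "M i j = 0 \<Longrightarrow> K i j = 0" unfolding K_def by simp
    assume "M i j \<noteq> 0"
    then have "M i j > 0" using M_nonneg by (metis less_eq_real_def)
    then show "K i j > 0" unfolding K_def using Mrow[of i] r_pos by simp
  qed
  have supp: "\<forall>i j. (M i j = 0 \<longrightarrow> S n i j = 0) \<and> (M i j \<noteq> 0 \<longrightarrow> S n i j > 0)" for n
    unfolding S_def by (rule support[OF M_rows M_cols r_pos c_pos suppK])
  have nonneg: "S n i j \<ge> 0" for n i j using supp[of n] by (metis less_eq_real_def order_refl)
  have rs: "(\<Sum>j\<in>UNIV. S n i j) > 0" for n i by (rule rowsum_pos[OF M_rows supp])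
  have cs: "(\<Sum>i\<in>UNIV. S n i j) > 0" for n j by (rule colsum_pos[OF M_cols supp])
  have lim: "(\<lambda>n. S n i j) \<longlonglongrightarrow> P i j" for i j
    using conv unfolding sinkhorn_converges_to_def S_def K_def by blast
  have Pnn: "P i j \<ge> 0" for i j
    by (rule LIMSEQ_le_const[OF lim]) (use nonneg in blast)
  have rowP: "(\<Sum>j\<in>UNIV. P i j) = r i" for i
  proof -
    have "(\<lambda>n. \<Sum>j\<in>UNIV. S n i j) \<longlonglongrightarrow> (\<Sum>j\<in>UNIV. P i j)" by (intro tendsto_sum lim)
    then have "((\<lambda>n. \<Sum>j\<in>UNIV. S n i j) \<circ> (\<lambda>n. Suc (2*n))) \<longlonglongrightarrow> (\<Sum>j\<in>UNIV. P i j)"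
      by (rule LIMSEQ_subseq_LIMSEQ) (simp add: strict_mono_def)
    moreover have "((\<lambda>n. \<Sum>j\<in>UNIV. S n i j) \<circ> (\<lambda>n. Suc (2*n))) = (\<lambda>n. r i)"
    proof
      fix n
      have "S (Suc (2*n)) = row_scale r (S (2*n))" unfolding S_def by simp
      then show "((\<lambda>n. \<Sum>j\<in>UNIV. S n i j) \<circ> (\<lambda>n. Suc (2*n))) n = r i"
        using row_scale_sum[of "S (2*n)" i r] rs[of "2*n" i] by simp
    qed
    ultimately show ?thesis using LIMSEQ_unique tendsto_const by metis
  qed
  have colP: "(\<Sum>i\<in>UNIV. P i j) = c j" for j
  proof -
    have "(\<lambda>n. \<Sum>i\<in>UNIV. S n i j) \<longlonglongrightarrow> (\<Sum>i\<in>UNIV. P i j)" by (intro tendsto_sum lim)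
    then have "((\<lambda>n. \<Sum>i\<in>UNIV. S n i j) \<circ> (\<lambda>n. Suc (Suc (2*n)))) \<longlonglongrightarrow> (\<Sum>i\<in>UNIV. P i j)"
      by (rule LIMSEQ_subseq_LIMSEQ) (simp add: strict_mono_def)
    moreover have "((\<lambda>n. \<Sum>i\<in>UNIV. S n i j) \<circ> (\<lambda>n. Suc (Suc (2*n)))) = (\<lambda>n. c j)"
    proof
      fix n
      have "S (Suc (Suc (2*n))) = col_scale c (S (Suc (2*n)))" unfolding S_def by simp
      then show "((\<lambda>n. \<Sum>i\<in>UNIV. S n i j) \<circ> (\<lambda>n. Suc (Suc (2*n)))) n = c j"
        using col_scale_sum[of "S (Suc (2*n))" j c] cs[of "Suc (2*n)" j] by simp
    qed
    ultimately show ?thesis using LIMSEQ_unique tendsto_const by metis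
  qed
  have PU: "P \<in> U r c" unfolding transport_polytope_def using Pnn rowP colP by blast
  have part1: "(let Tstar = (\<lambda>i j. P i j / c j); Lstar = (\<lambda>j i. P i j / r i) in
            \<forall>i j. Lstar j i = Tstar i j * c j / (\<Sum>k\<in>UNIV. Tstar i k * c k)
                \<and> Tstar i j = Lstar j i * r i / (\<Sum>k\<in>UNIV. Lstar j k * r k))"
  proof -
    have a: "(\<Sum>k\<in>UNIV. P i k / c k * c k) = r i" for i
      using rowP[of i] c_pos by (simp add: less_imp_neq[symmetric])
    have b: "(\<Sum>k\<in>UNIV. P k j / r k * r k) = c j" for j
      using colP[of j] r_pos by (simp add: less_imp_neq[symmetric])
    show ?thesis unfolding Let_def using a b c_pos r_pos by (simp add: less_imp_neq[symmetric])
  qed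
  have part2: "(\<forall>i j. M i j > 0) \<longrightarrow>
           (let C = (\<lambda>i j. - ln (M i j / (\<Sum>k\<in>UNIV. M i k)) - ln (r i)) in
             P \<in> U r c \<and>
             (\<forall>P'\<in>U r c. frob C P - shannon_entropy P \<le> frob C P' - shannon_entropy P'))"
  proof
    assume Mpos: "\<forall>i j. M i j > 0"
    define C where "C = (\<lambda>i j. - ln (M i j / (\<Sum>k\<in>UNIV. M i k)) - ln (r i))"
    have Kpos: "K i j > 0" for i j using suppK Mpos by (metis less_irrefl)
    have CK: "C i j = - ln (K i j)" for i j
    proof -
      have e: "K i j = r i * (M i j / (\<Sum>k\<in>UNIV. M i k))" unfolding K_def by simp
      have p: "M i j / (\<Sum>k\<in>UNIV. M i k) > 0" using Mpos Mrow[of i] by simp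
      have "ln (K i j) = ln (r i) + ln (M i j / (\<Sum>k\<in>UNIV. M i k))"
        unfolding e by (rule ln_mult_pos[OF r_pos[rule_format, of i] p])
      then show ?thesis unfolding C_def by simp
    qed
    have crossP: "P i j * P k l * K i l * K k j = P i l * P k j * K i j * K k l" for i j k l
    proof -
      have A: "(\<lambda>n. S n i j * S n k l * K i l * K k j) \<longlonglongrightarrow> P i j * P k l * K i l * K k j"
        by (intro tendsto_intros lim)
      have eq: "(\<lambda>n. S n i j * S n k l * K i l * K k j) = (\<lambda>n. S n i l * S n k j * K i j * K k l)"
        unfolding S_def by (simp add: cross_inv)
      have B: "(\<lambda>n. S n i l * S n k j * K i j * K k l) \<longlonglongrightarrow> P i l * P k j * K i j * K k l"
        by (intro tendsto_intros lim)
      from A have "(\<lambda>n. S n i l * S n k j * K i j * K k l) \<longlonglongrightarrow> P i j * P k l * K i l * K k j"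
        unfolding eq .
      from LIMSEQ_unique[OF this B] show ?thesis .
    qed
    have Ppos: "P i j > 0" for i j
    proof (rule ccontr)
      assume "\<not> P i j > 0"
      then have z: "P i j = 0" using Pnn[of i j] by simp
      obtain l where l: "P i l > 0"
      proof (rule ccontr)
        assume "\<not> thesis"
        have "P i l = 0" for l
        proof -
          have "\<not> P i l > 0" using that \<open>\<not> thesis\<close> by blast
          then show ?thesis using Pnn[of i l] by simp
        qed
        then have "\<forall>l. P i l = 0" by blast
        then have "(\<Sum>l\<in>UNIV. P i l) = 0" by simp
        then show False using rowP[of i] r_pos[rule_format, of i] by simp
      qed
      obtain k where k: "P k j > 0"
      proof (rule ccontr)
        assume "\<not> thesis"
        have "P k j = 0" for k
        proof -
          have "\<not> P k j > 0" using that \<open>\<not> thesis\<close> by blast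
          then show ?thesis using Pnn[of k j] by simp
        qed
        then have "\<forall>k. P k j = 0" by blast
        then have "(\<Sum>k\<in>UNIV. P k j) = 0" by simp
        then show False using colP[of j] c_pos[rule_format, of j] by simp
      qed
      have "P i l * P k j * K i j * K k l > 0" using l k Kpos by simp
      moreover have "P i j * P k l * K i l * K k j = 0" using z by simp
      ultimately show False using crossP[of i j k l] by simp
    qed
    define D where "D = (\<lambda>i j. ln (P i j) + C i j)"
    have Dln: "D i j = ln (P i j / K i j)" for i j
      unfolding D_def CK using Ppos[of i j] Kpos[of i j] by (simp add: ln_div)
    have Dadd: "D i j + D k l = D i l + D k j" for i j k l
    proof -
      have "P i j / K i j * (P k l / K k l) = P i l / K i l * (P k j / K k j)"
        using crossP[of i j k l] Kpos[of i j] Kpos[of k l] Kpos[of i l] Kpos[of k j] by (simp add: field_simps)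
      then have "ln (P i j / K i j * (P k l / K k l)) = ln (P i l / K i l * (P k j / K k j))" by simp
      moreover have "ln (P i j / K i j * (P k l / K k l)) = D i j + D k l"
        unfolding Dln by (intro ln_mult_pos divide_pos_pos Ppos Kpos)
      moreover have "ln (P i l / K i l * (P k j / K k j)) = D i l + D k j"
        unfolding Dln by (intro ln_mult_pos divide_pos_pos Ppos Kpos)
      ultimately show ?thesis by simp
    qed
    define i0 :: 'd where "i0 = undefined"
    define j0 :: 'h where "j0 = undefined"
    have Dform: "D i j = D i j0 + D i0 j - D i0 j0" for i j
      using Dadd[of i j i0 j0] by simp
    have main: "frob C P - shannon_entropy P \<le> frob C Q - shannon_entropy Q" if QU: "Q \<in> U r c" for Q
    proof -
      have Qnn: "Q i j \<ge> 0" for i j using QU unfolding transport_polytope_def by blast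
      have rowQ: "(\<Sum>j\<in>UNIV. Q i j) = r i" for i using QU unfolding transport_polytope_def by blast
      have colQ: "(\<Sum>i\<in>UNIV. Q i j) = c j" for j using QU unfolding transport_polytope_def by blast
      define phi where "phi = (\<lambda>q::real. if q = 0 then 0 else q * ln q)"
      have eP: "frob C P - shannon_entropy P = (\<Sum>i\<in>UNIV. \<Sum>j\<in>UNIV. C i j * P i j + phi (P i j))"
        unfolding frob_def shannon_entropy_def phi_def by (simp add: sum.distrib)
      have eQ: "frob C Q - shannon_entropy Q = (\<Sum>i\<in>UNIV. \<Sum>j\<in>UNIV. C i j * Q i j + phi (Q i j))"
        unfolding frob_def shannon_entropy_def phi_def by (simp add: sum.distrib)
      have tm: "C i j * Q i j + phi (Q i j) - (C i j * P i j + phi (P i j))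
                \<ge> D i j * (Q i j - P i j) + (Q i j - P i j)" for i j
      proof -
        have t: "phi (Q i j) - Q i j * ln (P i j) \<ge> Q i j - P i j"
          unfolding phi_def by (rule term_ineq[OF Ppos Qnn])
        have "phi (P i j) = P i j * ln (P i j)" unfolding phi_def using Ppos[of i j] by simp
        then show ?thesis using t unfolding D_def by (simp add: algebra_simps)
      qed
      have s1: "(\<Sum>i\<in>UNIV. \<Sum>j\<in>UNIV. D i j0 * (Q i j - P i j)) = 0"
        by (simp add: sum_distrib_left[symmetric] sum_subtractf rowQ rowP)
      have s2: "(\<Sum>i\<in>UNIV. \<Sum>j\<in>UNIV. D i0 j * (Q i j - P i j)) = 0"
        by (subst sum.swap) (simp add: sum_distrib_left[symmetric] sum_subtractf colQ colP)
      have s3: "(\<Sum>i\<in>UNIV. \<Sum>j\<in>UNIV. D i0 j0 * (Q i j - P i j)) = 0"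
        by (simp add: sum_distrib_left[symmetric] sum_subtractf rowQ rowP)
      have s4: "(\<Sum>i\<in>UNIV. \<Sum>j\<in>UNIV. (Q i j - P i j)) = 0"
        by (simp add: sum_subtractf rowQ rowP)
      have "(\<Sum>i\<in>UNIV. \<Sum>j\<in>UNIV. D i j * (Q i j - P i j) + (Q i j - P i j))
          = (\<Sum>i\<in>UNIV. \<Sum>j\<in>UNIV. D i j0 * (Q i j - P i j))
            + (\<Sum>i\<in>UNIV. \<Sum>j\<in>UNIV. D i0 j * (Q i j - P i j))
            - (\<Sum>i\<in>UNIV. \<Sum>j\<in>UNIV. D i0 j0 * (Q i j - P i j))
            + (\<Sum>i\<in>UNIV. \<Sum>j\<in>UNIV. (Q i j - P i j))"
      proof -
        have pw: "D i j * (Q i j - P i j) + (Q i j - P i j) = D i j0 * (Q i j - P i j) + D i0 j * (Q i j - P i j)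
            - D i0 j0 * (Q i j - P i j) + (Q i j - P i j)" for i j
          by (subst Dform[of i j]) (simp add: algebra_simps)
        have "(\<Sum>i\<in>UNIV. \<Sum>j\<in>UNIV. D i j * (Q i j - P i j) + (Q i j - P i j))
          = (\<Sum>i\<in>UNIV. \<Sum>j\<in>UNIV. D i j0 * (Q i j - P i j) + D i0 j * (Q i j - P i j)
            - D i0 j0 * (Q i j - P i j) + (Q i j - P i j))"
          by (intro sum.cong refl pw)
        also have "\<dots> = (\<Sum>i\<in>UNIV. \<Sum>j\<in>UNIV. D i j0 * (Q i j - P i j))
            + (\<Sum>i\<in>UNIV. \<Sum>j\<in>UNIV. D i0 j * (Q i j - P i j))
            - (\<Sum>i\<in>UNIV. \<Sum>j\<in>UNIV. D i0 j0 * (Q i j - P i j))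
            + (\<Sum>i\<in>UNIV. \<Sum>j\<in>UNIV. (Q i j - P i j))"
          by (simp only: sum.distrib sum_subtractf)
        finally show ?thesis .
      qed
      then have z: "(\<Sum>i\<in>UNIV. \<Sum>j\<in>UNIV. D i j * (Q i j - P i j) + (Q i j - P i j)) = 0"
        using s1 s2 s3 s4 by linarith
      have "(\<Sum>i\<in>UNIV. \<Sum>j\<in>UNIV. D i j * (Q i j - P i j) + (Q i j - P i j))
           \<le> (\<Sum>i\<in>UNIV. \<Sum>j\<in>UNIV. (C i j * Q i j + phi (Q i j)) - (C i j * P i j + phi (P i j)))"
        by (intro sum_mono) (rule tm)
      moreover have "(\<Sum>i\<in>UNIV. \<Sum>j\<in>UNIV. (C i j * Q i j + phi (Q i j)) - (C i j * P i j + phi (P i j)))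
          = (\<Sum>i\<in>UNIV. \<Sum>j\<in>UNIV. C i j * Q i j + phi (Q i j)) - (\<Sum>i\<in>UNIV. \<Sum>j\<in>UNIV. C i j * P i j + phi (P i j))"
        by (simp only: sum_subtractf)
      ultimately show ?thesis unfolding eP eQ using z by linarith
    qed
    show "let C = (\<lambda>i j. - ln (M i j / (\<Sum>k\<in>UNIV. M i k)) - ln (r i)) in
             P \<in> U r c \<and>
             (\<forall>P'\<in>U r c. frob C P - shannon_entropy P \<le> frob C P' - shannon_entropy P')"
      unfolding Let_def C_def[symmetric] using PU main by blast
  qed
  show ?thesis using part1 part2 by blast
qed

end
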